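(* Let $\Omega$ be a convex domain in $\mathbb{R}^n$, let $\tau$ be a smooth symmetric $(0,2)$-tensor field on $\Omega$, and let $x_0\neq y_0$ be points of $\Omega$. Let $e_1,\dots,e_n$ be an orthonormal frame of $\mathbb{R}^n$ with $e_n=N(x_0,y_0)$, and let $\tilde E_n=(e_n,-e_n)\in\mathbb{R}^n\times\mathbb{R}^n$. Then $$\nabla_{\tilde E_n}\nabla_{\tilde E_n}E_{\tau}(x_0,y_0)=E_{\nabla_{e_n}\nabla_{e_n}\tau}(x_0,y_0).$$
   Context: For $x,y\in\mathbb{R}^n$ let $r(x,y)=\|x-y\|$, and for $x\neq y$ let $N(x,y)=\frac{y-x}{\|y-x\|}$ and $\theta(s,x,y)=x+sN(x,y)$. For a symmetric $(0,2)$-tensor field $\tau$ on $\Omega$, $E_\tau(x,y)=\int_0^{r(x,y)}\tau(\theta(s,x,y))(N(x,y),N(x,y))\,ds$, viewed as a function of $(x,y)\in\Omega\times\Omega$; $\nabla_{V}$ for $V\in\mathbb{R}^n\times\mathbb{R}^n$ denotes the directional derivative of a function of $(x,y)$ in direction $V$. $\nabla_{e_n}\nabla_{e_n}\tau$ is the second (Euclidean) covariant derivative of $\tau$ in direction $e_n$. *)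

theory Defs
  imports "HOL-Analysis.Analysis"
begin

fun Ck_on :: "nat \<Rightarrow> 'a::euclidean_space set \<Rightarrow> ('a \<Rightarrow> real) \<Rightarrow> bool" where
  "Ck_on 0 S f = continuous_on S f"
| "Ck_on (Suc k) S f = (f differentiable_on S \<and>
     (\<forall>i\<in>Basis. Ck_on k S (\<lambda>x. frechet_derivative f (at x) i)))"

definition smooth_on :: "'a::euclidean_space set \<Rightarrow> ('a \<Rightarrow> real) \<Rightarrow> bool" where
  "smooth_on S f = (\<forall>k. Ck_on k S f)"

definition smooth_sym_tensor_on ::
  "'a::euclidean_space set \<Rightarrow> ('a \<Rightarrow> 'a \<Rightarrow> 'a \<Rightarrow> real) \<Rightarrow> bool" where
  "smooth_sym_tensor_on S tau =
     ((\<forall>x\<in>S. bilinear (tau x) \<and> (\<forall>v w. tau x v w = tau x w v)) \<and>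
      (\<forall>v w. smooth_on S (\<lambda>x. tau x v w)))"

definition r :: "'a::euclidean_space \<Rightarrow> 'a \<Rightarrow> real" where
  "r x y = norm (x - y)"

definition N :: "'a::euclidean_space \<Rightarrow> 'a \<Rightarrow> 'a" where
  "N x y = (y - x) /\<^sub>R norm (y - x)"

definition \<theta> :: "real \<Rightarrow> 'a::euclidean_space \<Rightarrow> 'a \<Rightarrow> 'a" where
  "\<theta> s x y = x + s *\<^sub>R N x y"

definition E :: "('a::euclidean_space \<Rightarrow> 'a \<Rightarrow> 'a \<Rightarrow> real) \<Rightarrow> 'a \<times> 'a \<Rightarrow> real" where
  "E tau p = (case p of (x, y) \<Rightarrow>
      integral {0..r x y} (\<lambda>s. tau (\<theta> s x y) (N x y) (N x y)))"

definition dirderiv :: "('b::real_normed_vector \<Rightarrow> real) \<Rightarrow> 'b \<Rightarrow> 'b \<Rightarrow> real" where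
  "dirderiv F V p = deriv (\<lambda>t. F (p + t *\<^sub>R V)) 0"

text \<open>Euclidean covariant derivative of a (0,2)-tensor field in the constant direction e.\<close>
definition cov_deriv :: "'a::euclidean_space \<Rightarrow> ('a \<Rightarrow> 'a \<Rightarrow> 'a \<Rightarrow> real) \<Rightarrow> 'a \<Rightarrow> 'a \<Rightarrow> 'a \<Rightarrow> real" where
  "cov_deriv e tau p v w = deriv (\<lambda>t. tau (p + t *\<^sub>R e) v w) 0"

end

theory Submission
  imports Defs
begin

lemma line_deriv:
  fixes h :: "'a::euclidean_space \<Rightarrow> real"
  assumes "h differentiable (at (x0 + u *\<^sub>R e))"
  shows "((\<lambda>u. h (x0 + u *\<^sub>R e)) has_real_derivative frechet_derivative h (at (x0 + u *\<^sub>R e)) e) (at u)"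
proof -
  have d1: "((\<lambda>u. x0 + u *\<^sub>R e) has_derivative (\<lambda>d. d *\<^sub>R e)) (at u)"
    by (auto intro!: derivative_eq_intros)
  have d2: "(h has_derivative frechet_derivative h (at (x0 + u *\<^sub>R e))) (at (x0 + u *\<^sub>R e))"
    using assms frechet_derivative_works by blast
  have lin: "linear (frechet_derivative h (at (x0 + u *\<^sub>R e)))"
    using assms linear_frechet_derivative by blast
  have "((\<lambda>u. h (x0 + u *\<^sub>R e)) has_derivative (\<lambda>d. frechet_derivative h (at (x0 + u *\<^sub>R e)) (d *\<^sub>R e))) (at u)"
    using has_derivative_compose[OF d1 d2] by (simp add: o_def)
  moreover have "(\<lambda>d. frechet_derivative h (at (x0 + u *\<^sub>R e)) (d *\<^sub>R e)) = (\<lambda>d. d * frechet_derivative h (at (x0 + u *\<^sub>R e)) e)"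
    using lin by (simp add: linear_scale)
  moreover have "(\<lambda>d. d * frechet_derivative h (at (x0 + u *\<^sub>R e)) e) = (*) (frechet_derivative h (at (x0 + u *\<^sub>R e)) e)"
    by (rule ext) simp
  ultimately show ?thesis by (simp add: has_field_derivative_def)
qed

lemma line_deriv0:
  fixes h :: "'a::euclidean_space \<Rightarrow> real"
  assumes "h differentiable (at p)"
  shows "deriv (\<lambda>t. h (p + t *\<^sub>R e)) 0 = frechet_derivative h (at p) e"
  using line_deriv[of h p 0 e] assms by (simp add: DERIV_imp_deriv)

lemma frechet_sum:
  fixes h :: "'a::euclidean_space \<Rightarrow> real"
  assumes "h differentiable (at p)"
  shows "frechet_derivative h (at p) e = (\<Sum>i\<in>Basis. (e \<bullet> i) * frechet_derivative h (at p) i)"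
proof -
  have lin: "linear (frechet_derivative h (at p))"
    using assms linear_frechet_derivative by blast
  have "frechet_derivative h (at p) e = frechet_derivative h (at p) (\<Sum>i\<in>Basis. (e \<bullet> i) *\<^sub>R i)"
    by (simp add: euclidean_representation)
  also have "\<dots> = (\<Sum>i\<in>Basis. (e \<bullet> i) * frechet_derivative h (at p) i)"
    using lin by (simp add: linear_sum linear_scale)
  finally show ?thesis .
qed

theorem theorem2p5:
  fixes \<Omega> :: "'a::euclidean_space set"
    and tau :: "'a \<Rightarrow> 'a \<Rightarrow> 'a \<Rightarrow> real"
    and x0 y0 :: 'a
  assumes "open \<Omega>" and "convex \<Omega>" and "\<Omega> \<noteq> {}"
    and "smooth_sym_tensor_on \<Omega> tau"
    and "x0 \<in> \<Omega>" and "y0 \<in> \<Omega>" and "x0 \<noteq> y0"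
  shows "dirderiv (dirderiv (E tau) (N x0 y0, - N x0 y0)) (N x0 y0, - N x0 y0) (x0, y0)
           = E (cov_deriv (N x0 y0) (cov_deriv (N x0 y0) tau)) (x0, y0)"
proof -
  define L where "L = norm (y0 - x0)"
  define e where "e = N x0 y0"
  have Lpos: "L > 0" using assms(7) by (simp add: L_def)
  have e_def': "e = (1 / L) *\<^sub>R (y0 - x0)" by (simp add: e_def N_def L_def inverse_eq_divide)
  have ne: "norm e = 1" using Lpos by (simp add: e_def' L_def)
  have y0e: "y0 = x0 + L *\<^sub>R e" using Lpos by (simp add: e_def')
  define h where "h = (\<lambda>x. tau x e e)"
  have "smooth_on \<Omega> h" using assms(4) by (simp add: smooth_sym_tensor_on_def h_def)
  then have C2: "Ck_on (Suc (Suc 0)) \<Omega> h" by (simp add: smooth_on_def)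
  define g where "g = (\<lambda>i x. frechet_derivative h (at x) i)"
  have hd: "\<forall>x\<in>\<Omega>. h differentiable at x"
    using C2 assms(1) differentiable_on_eq_differentiable_at by auto
  have gd: "\<forall>i\<in>Basis. \<forall>x\<in>\<Omega>. g i differentiable at x"
    using C2 assms(1) differentiable_on_eq_differentiable_at by (auto simp: g_def)
  define D1 where "D1 = (\<lambda>x. \<Sum>i\<in>Basis. (e \<bullet> i) * g i x)"
  have D1d: "\<forall>x\<in>\<Omega>. D1 differentiable at x"
    unfolding D1_def using gd by (auto intro!: differentiable_sum differentiable_mult)
  have D1eq: "\<forall>x\<in>\<Omega>. frechet_derivative h (at x) e = D1 x"
    using hd frechet_sum by (auto simp: D1_def g_def)
  have covD: "\<forall>q\<in>\<Omega>. cov_deriv e tau q e e = D1 q"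
  proof
    fix q assume q: "q \<in> \<Omega>"
    have "cov_deriv e tau q e e = deriv (\<lambda>t. h (q + t *\<^sub>R e)) 0" by (simp add: cov_deriv_def h_def)
    also have "\<dots> = frechet_derivative h (at q) e" using hd q line_deriv0 by blast
    finally show "cov_deriv e tau q e e = D1 q" using D1eq q by simp
  qed
  define f where "f = (\<lambda>u. h (x0 + u *\<^sub>R e))"
  define f1 where "f1 = (\<lambda>u. D1 (x0 + u *\<^sub>R e))"
  define f2 where "f2 = (\<lambda>u. frechet_derivative D1 (at (x0 + u *\<^sub>R e)) e)"
  obtain \<epsilon>1 where e1: "\<epsilon>1 > 0" "ball x0 \<epsilon>1 \<subseteq> \<Omega>" using assms(1,5) open_contains_ball by blast
  obtain \<epsilon>2 where e2: "\<epsilon>2 > 0" "ball y0 \<epsilon>2 \<subseteq> \<Omega>" using assms(1,6) open_contains_ball by blast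
  define \<delta> where "\<delta> = min \<epsilon>1 \<epsilon>2 / 2"
  have dpos: "\<delta> > 0" using e1 e2 by (simp add: \<delta>_def)
  have seg: "x0 + u *\<^sub>R e \<in> \<Omega>" if "u \<in> {-\<delta>..L+\<delta>}" for u
  proof -
    consider "u < 0" | "u > L" | "0 \<le> u \<and> u \<le> L" by linarith
    then show ?thesis
    proof cases
      case 1
      have "dist x0 (x0 + u *\<^sub>R e) = \<bar>u\<bar>" using ne by (simp add: dist_norm)
      also have "\<dots> < \<epsilon>1" using 1 that e1 e2 by (auto simp: \<delta>_def)
      finally show ?thesis using e1 by auto
    next
      case 2
      have "dist y0 (x0 + u *\<^sub>R e) = norm ((L - u) *\<^sub>R e)"
        by (simp add: dist_norm y0e algebra_simps)
      also have "\<dots> = \<bar>u - L\<bar>" using ne by simp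
      also have "\<dots> < \<epsilon>2" using 2 that e1 e2 by (auto simp: \<delta>_def)
      finally show ?thesis using e2 by auto
    next
      case 3
      have "x0 + u *\<^sub>R e = (1 - u / L) *\<^sub>R x0 + (u / L) *\<^sub>R y0"
        using Lpos by (simp add: y0e algebra_simps)
      then show ?thesis using 3 Lpos assms(2,5,6) unfolding convex_def by auto
    qed
  qed
  have fD: "(f has_real_derivative f1 u) (at u)" if "u \<in> {-\<delta>..L+\<delta>}" for u
    using line_deriv[of h x0 u e] hd D1eq seg[OF that] by (simp add: f_def f1_def)
  have f1D: "(f1 has_real_derivative f2 u) (at u)" if "u \<in> {-\<delta>..L+\<delta>}" for u
    using line_deriv[of D1 x0 u e] D1d seg[OF that] by (simp add: f2_def f1_def)
  define c where "c = -\<delta>"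
  define d where "d = L + \<delta>"
  have contf: "continuous_on {c..d} f"
    by (rule continuous_at_imp_continuous_on) (use fD DERIV_isCont in \<open>fastforce simp: c_def d_def\<close>)
  define P where "P = (\<lambda>z. integral {c..z} f)"
  have PD: "(P has_real_derivative f z) (at z)" if "c < z" "z < d" for z
  proof -
    have "(P has_real_derivative f z) (at z within {c..d})"
      unfolding P_def using integral_has_real_derivative[OF contf, of z] that by simp
    then show ?thesis using at_within_Icc_at[OF that] by simp
  qed
  define \<eta> where "\<eta> = min \<delta> (L/2)"
  have etapos: "\<eta> > 0" using dpos Lpos by (simp add: \<eta>_def)
  define V where "V = (e, -e)"
  define p0 where "p0 = (x0, y0)"
  have Eform: "E tau (p0 + a *\<^sub>R V) = P (L - a) - P a" if a: "\<bar>a\<bar> < \<eta>" for a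
  proof -
    define x where "x = x0 + a *\<^sub>R e"
    define y where "y = y0 - a *\<^sub>R e"
    have pe: "p0 + a *\<^sub>R V = (x, y)" by (simp add: p0_def V_def x_def y_def)
    have L2a: "L - 2*a > 0" using a by (auto simp: \<eta>_def)
    have yx: "y - x = (L - 2*a) *\<^sub>R e" by (simp add: x_def y_def y0e algebra_simps scaleR_2 flip: scaleR_add_left)
    have Nxy: "N x y = e" using L2a ne by (simp add: N_def yx)
    have rxy: "r x y = L - 2*a" using L2a ne by (simp add: r_def norm_minus_commute[of x y] yx)
    have th: "\<theta> s x y = x0 + (a + s) *\<^sub>R e" for s unfolding \<theta>_def Nxy by (simp add: x_def algebra_simps)
    have "E tau (x, y) = integral {0..L - 2*a} (\<lambda>s. f (a + s))"
      by (simp add: E_def rxy th Nxy f_def h_def)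
    also have "\<dots> = P (a + (L - 2*a)) - P (a + 0)"
    proof (rule integral_unique, rule fundamental_theorem_of_calculus)
      show "0 \<le> L - 2*a" using L2a by simp
      fix s assume s: "s \<in> {0..L - 2*a}"
      have "c < a + s" "a + s < d" using s a dpos by (auto simp: \<eta>_def c_def d_def)
      then have "((\<lambda>s. P (a + s)) has_real_derivative f (a + s) * 1) (at s)"
        by (intro DERIV_chain2[OF PD]) (auto intro!: derivative_eq_intros)
      then show "((\<lambda>s. P (a + s)) has_vector_derivative f (a + s)) (at s within {0..L - 2*a})"
        by (simp add: has_real_derivative_iff_has_vector_derivative has_vector_derivative_at_within)
    qed
    finally show ?thesis using pe by simp
  qed
  have Gform: "dirderiv (E tau) V (p0 + t *\<^sub>R V) = - f (L - t) - f t" if t: "\<bar>t\<bar> < \<eta>" for t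
  proof -
    have ev: "eventually (\<lambda>s. E tau (p0 + t *\<^sub>R V + s *\<^sub>R V) = P (L - (t + s)) - P (t + s)) (nhds 0)"
    proof -
      have "eventually (\<lambda>s. dist s 0 < \<eta> - \<bar>t\<bar>) (nhds (0::real))"
        using t unfolding eventually_nhds_metric by (intro exI[of _ "\<eta> - \<bar>t\<bar>"]) auto
      then show ?thesis
      proof (rule eventually_mono)
        fix s :: real assume "dist s 0 < \<eta> - \<bar>t\<bar>"
        then have "\<bar>t + s\<bar> < \<eta>" by auto
        then show "E tau (p0 + t *\<^sub>R V + s *\<^sub>R V) = P (L - (t + s)) - P (t + s)"
          using Eform[of "t + s"] by (simp add: scaleR_add_left add.assoc)
      qed
    qed
    have inr: "c < L - t" "L - t < d" "c < t" "t < d" using t dpos Lpos by (auto simp: \<eta>_def c_def d_def)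
    have inner: "((\<lambda>s. L - (t + s)) has_real_derivative -1) (at 0)" by (auto intro!: derivative_eq_intros)
    have d1: "((\<lambda>s. P (L - (t + s))) has_real_derivative f (L - t) * (-1)) (at 0)"
      using inner DERIV_chain2[where f=P and g="\<lambda>s. L - (t + s)" and x=0 and Da="f (L - t)" and Db="-1" and s=UNIV] PD[of "L - t"] inr
      by simp
    have inner: "((\<lambda>s. t + s) has_real_derivative 1) (at 0)" by (auto intro!: derivative_eq_intros)
    have d2: "((\<lambda>s. P (t + s)) has_real_derivative f t * 1) (at 0)"
      using inner DERIV_chain2[where f=P and g="\<lambda>s. t + s" and x=0 and Da="f t" and Db=1 and s=UNIV] PD[of t] inr
      by simp
    have "((\<lambda>s. P (L - (t + s)) - P (t + s)) has_real_derivative (f (L - t) * (-1) - f t * 1)) (at 0)"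
      by (rule DERIV_diff[OF d1 d2])
    then have "((\<lambda>s. E tau (p0 + t *\<^sub>R V + s *\<^sub>R V)) has_real_derivative (- f (L - t) - f t)) (at 0)"
      using DERIV_cong_ev[OF refl ev refl] by simp
    then show ?thesis unfolding dirderiv_def by (rule DERIV_imp_deriv)
  qed
  have LHS: "dirderiv (dirderiv (E tau) V) V p0 = f1 L - f1 0"
  proof -
    have ev: "eventually (\<lambda>t. dirderiv (E tau) V (p0 + t *\<^sub>R V) = - f (L - t) - f t) (nhds 0)"
    proof -
      have "eventually (\<lambda>s. dist s 0 < \<eta>) (nhds (0::real))"
        using etapos by (auto simp: eventually_nhds_metric)
      then show ?thesis by (rule eventually_mono) (use Gform in auto)
    qed
    have inner: "((\<lambda>s. L - s) has_real_derivative -1) (at 0)" by (auto intro!: derivative_eq_intros)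
    have d1: "((\<lambda>s. f (L - s)) has_real_derivative f1 L * (-1)) (at 0)"
      using inner DERIV_chain2[where f=f and g="\<lambda>s. L - s" and x=0 and Da="f1 L" and Db="-1" and s=UNIV] fD[of L] dpos Lpos
      by simp
    have d2: "(f has_real_derivative f1 0) (at 0)" using fD[of 0] dpos Lpos by auto
    have "((\<lambda>t. - f (L - t) - f t) has_real_derivative (- (f1 L * (-1)) - f1 0)) (at 0)"
      by (rule DERIV_diff[OF DERIV_minus[OF d1] d2])
    then have "((\<lambda>t. dirderiv (E tau) V (p0 + t *\<^sub>R V)) has_real_derivative (f1 L - f1 0)) (at 0)"
      using DERIV_cong_ev[OF refl ev refl] by simp
    then show ?thesis unfolding dirderiv_def[of "dirderiv (E tau) V"] by (rule DERIV_imp_deriv)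
  qed
  have RHS: "E (cov_deriv e (cov_deriv e tau)) (x0, y0) = f1 L - f1 0"
  proof -
    have Nxy: "N x0 y0 = e" by (simp add: e_def)
    have rxy: "r x0 y0 = L" by (simp add: r_def L_def norm_minus_commute)
    have cc: "cov_deriv e (cov_deriv e tau) (\<theta> s x0 y0) e e = f2 s" if s: "s \<in> {0..L}" for s
    proof -
      have "eventually (\<lambda>t. dist t 0 < \<delta>) (nhds (0::real))"
        using dpos by (auto simp: eventually_nhds_metric)
      then have ev: "eventually (\<lambda>t. cov_deriv e tau (\<theta> s x0 y0 + t *\<^sub>R e) e e = f1 (s + t)) (nhds 0)"
      proof (rule eventually_mono)
        fix t :: real assume "dist t 0 < \<delta>"
        then have "s + t \<in> {-\<delta>..L+\<delta>}" using s by auto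
        then have "x0 + (s + t) *\<^sub>R e \<in> \<Omega>" by (rule seg)
        moreover have "\<theta> s x0 y0 + t *\<^sub>R e = x0 + (s + t) *\<^sub>R e"
          by (simp add: \<theta>_def Nxy scaleR_add_left)
        ultimately show "cov_deriv e tau (\<theta> s x0 y0 + t *\<^sub>R e) e e = f1 (s + t)"
          using covD by (simp add: f1_def)
      qed
      have inner: "((\<lambda>t. s + t) has_real_derivative 1) (at 0)" by (auto intro!: derivative_eq_intros)
      have "((\<lambda>t. f1 (s + t)) has_real_derivative f2 s * 1) (at 0)"
        using inner DERIV_chain2[where f=f1 and g="\<lambda>t. s + t" and x=0 and Da="f2 s" and Db=1 and s=UNIV] f1D[of s] s dpos
        by simp
      then have "((\<lambda>t. cov_deriv e tau (\<theta> s x0 y0 + t *\<^sub>R e) e e) has_real_derivative f2 s) (at 0)"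
        using DERIV_cong_ev[OF refl ev refl] by simp
      then show ?thesis unfolding cov_deriv_def[of e "cov_deriv e tau"] by (rule DERIV_imp_deriv)
    qed
    have "E (cov_deriv e (cov_deriv e tau)) (x0, y0) = integral {0..L} (\<lambda>s. cov_deriv e (cov_deriv e tau) (\<theta> s x0 y0) e e)"
      by (simp add: E_def Nxy rxy)
    also have "\<dots> = integral {0..L} f2" using cc by (rule integral_cong)
    also have "\<dots> = f1 L - f1 0"
    proof (rule integral_unique, rule fundamental_theorem_of_calculus)
      show "0 \<le> L" using Lpos by simp
      fix s assume s: "s \<in> {0..L}"
      then have "(f1 has_real_derivative f2 s) (at s)" using dpos by (intro f1D) auto
      then show "(f1 has_vector_derivative f2 s) (at s within {0..L})"
        by (simp add: has_real_derivative_iff_has_vector_derivative has_vector_derivative_at_within)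
    qed
    finally show ?thesis .
  qed
  show ?thesis using LHS RHS by (simp add: V_def p0_def e_def)
qed

end
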